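(* Let $X\subseteq W$ be a block subspace, $(y_n)$ a block sequence in $W$, $\alpha<\omega_1$ and $K,C\ge1$. Assume that (a) II has a strategy in $F^\alpha_X$ to play $(x_0,\dots,x_k)$ such that $(x_0,\dots,x_k)\sim_K(y_0,\dots,y_k)$, and (b) II has a strategy in $A^\alpha_X$ to play $(u_0,v_0,\dots,u_k,v_k)$ such that $(u_0,\dots,u_k)\sim_C(v_0,\dots,v_k)$. Then II has a strategy in $G^\alpha_X$ to play $(v_0,\dots,v_k)$ such that $(v_0,\dots,v_k)\sim_{KC}(y_0,\dots,y_k)$.
   Context: Let $\mathcal W$ be a real Banach space with Schauder basis $(e_n)$. Fix a countable subfield $\mathfrak F\subseteq\mathbb R$ such that $\|\sum_{n\le m}a_ne_n\|\in\mathfrak F$ whenever all $a_n\in\mathfrak F$, and let $W$ be the $\mathfrak F$-vector space of finite $\mathfrak F$-linear combinations of the $e_n$, with the norm of $\mathcal W$; subspaces are $\mathfrak F$-linear in $W$. For nonzero $x=\sum a_ne_n$, ${\rm supp}(x)=\{n:a_n\neq0\}$, and $x<y$ means $\max{\rm supp}(x)<\min{\rm supp}(y)$. A block sequence is a sequence of nonzero vectors $x_0<x_1<\dots$; a block subspace is the span of an infinite block sequence. $[e_i]_{i>n}$ is the span of $\{e_i:i>n\}$. $(x_i)_{i\le k}\sim_K(y_i)_{i\le k}$ means $\frac1K\|\sum a_ix_i\|\le\|\sum a_iy_i\|\le K\|\sum a_ix_i\|$ for all real $a_i$. In each game below, $\xi_l$ denotes ordinals with $\xi_0<\alpha$ and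 $\xi_l<\xi_{l-1}$ for $l\ge1$, the game ends after II's response in the round $k$ in which $\xi_k=0$ (immediately with empty outcome if $\alpha=0$). Game $G^\alpha_X$: in round $l$, I plays a block subspace $Y_l\subseteq X$ and $\xi_l$; II plays a finite-dimensional $F_l\subseteq Y_l$ and a nonzero $v_l\in F_0+\dots+F_l$; outcome $(v_0,\dots,v_k)$. Game $F^\alpha_X$: in round $l$, I plays an integer $n_l$ and $\xi_l$; II plays a finite-dimensional $F_l\subseteq X\cap[e_i]_{i>n_l}$ and a nonzero $x_l\in F_0+\dots+F_l$; outcome $(x_0,\dots,x_k)$. Game $A^\alpha_X$: in round $l$, II plays an integer $n_l$; I plays a finite-dimensional $E_l\subseteq X\cap[e_i]_{i>n_l}$, a nonzero $u_l\in E_0+\dots+E_l$, a block subspace $Y_l\subseteq X$ and $\xi_l$; II plays a finite-dimensional $F_l\subseteq Y_l$ and a nonzero $v_l\in F_0+\dots+F_l$; outcome $(u_0,v_0,\dots,u_k,v_k)$. "II has a strategy to play ... such that P" means II can ensure the outcome satisfies P. *)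

theory Defs
  imports "HOL-Analysis.Analysis"
begin

definition schauder_basis :: "(nat \<Rightarrow> 'a::banach) \<Rightarrow> bool" where
  "schauder_basis e \<longleftrightarrow>
     (\<forall>x. \<exists>!c::nat \<Rightarrow> real. (\<lambda>m. \<Sum>n<m. c n *\<^sub>R e n) \<longlonglongrightarrow> x)"

definition coord :: "(nat \<Rightarrow> 'a::banach) \<Rightarrow> 'a \<Rightarrow> nat \<Rightarrow> real" where
  "coord e x = (THE c. (\<lambda>m. \<Sum>n<m. c n *\<^sub>R e n) \<longlonglongrightarrow> x)"

definition supp :: "(nat \<Rightarrow> 'a::banach) \<Rightarrow> 'a \<Rightarrow> nat set" where
  "supp e x = {n. coord e x n \<noteq> 0}"

text \<open>x < y for nonzero vectors: max supp x < min supp y.\<close>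
definition block_lt :: "(nat \<Rightarrow> 'a::banach) \<Rightarrow> 'a \<Rightarrow> 'a \<Rightarrow> bool" where
  "block_lt e x y \<longleftrightarrow> Max (supp e x) < Min (supp e y)"

definition countable_subfield :: "real set \<Rightarrow> bool" where
  "countable_subfield F \<longleftrightarrow> countable F \<and> 0 \<in> F \<and> 1 \<in> F \<and>
     (\<forall>a\<in>F. \<forall>b\<in>F. a + b \<in> F \<and> a * b \<in> F) \<and>
     (\<forall>a\<in>F. - a \<in> F \<and> inverse a \<in> F)"

definition norm_closed :: "(nat \<Rightarrow> 'a::banach) \<Rightarrow> real set \<Rightarrow> bool" where
  "norm_closed e F \<longleftrightarrow>
     (\<forall>m (a::nat \<Rightarrow> real). (\<forall>n\<le>m. a n \<in> F) \<longrightarrow> norm (\<Sum>n\<le>m. a n *\<^sub>R e n) \<in> F)"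

definition Fspan :: "real set \<Rightarrow> 'a::real_vector set \<Rightarrow> 'a set" where
  "Fspan F A = {x. \<exists>S c. finite S \<and> S \<subseteq> A \<and> (\<forall>v\<in>S. c v \<in> F) \<and> x = (\<Sum>v\<in>S. c v *\<^sub>R v)}"

definition Wsp :: "(nat \<Rightarrow> 'a::banach) \<Rightarrow> real set \<Rightarrow> 'a set" where
  "Wsp e F = Fspan F (range e)"

definition tailsp :: "(nat \<Rightarrow> 'a::banach) \<Rightarrow> real set \<Rightarrow> int \<Rightarrow> 'a set" where
  "tailsp e F n = Fspan F {e i | i. int i > n}"

definition Fsubspace :: "(nat \<Rightarrow> 'a::banach) \<Rightarrow> real set \<Rightarrow> 'a set \<Rightarrow> bool" where
  "Fsubspace e F V \<longleftrightarrow> V \<subseteq> Wsp e F \<and> 0 \<in> V \<and> (\<forall>x\<in>V. \<forall>y\<in>V. x + y \<in> V) \<and>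
     (\<forall>c\<in>F. \<forall>x\<in>V. c *\<^sub>R x \<in> V)"

definition Ffindim :: "(nat \<Rightarrow> 'a::banach) \<Rightarrow> real set \<Rightarrow> 'a set \<Rightarrow> bool" where
  "Ffindim e F V \<longleftrightarrow> Fsubspace e F V \<and> (\<exists>B. finite B \<and> V = Fspan F B)"

definition block_seq :: "(nat \<Rightarrow> 'a::banach) \<Rightarrow> real set \<Rightarrow> (nat \<Rightarrow> 'a) \<Rightarrow> bool" where
  "block_seq e F x \<longleftrightarrow> (\<forall>n. x n \<in> Wsp e F \<and> x n \<noteq> 0 \<and> block_lt e (x n) (x (Suc n)))"

definition block_subspace :: "(nat \<Rightarrow> 'a::banach) \<Rightarrow> real set \<Rightarrow> 'a set \<Rightarrow> bool" where
  "block_subspace e F Y \<longleftrightarrow> (\<exists>x. block_seq e F x \<and> Y = Fspan F (range x))"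

definition sumset :: "'a::real_vector set list \<Rightarrow> 'a set" where
  "sumset Fs = {sum_list xs | xs. list_all2 (\<in>) xs Fs}"

definition equiv_seq :: "real \<Rightarrow> 'a::real_normed_vector list \<Rightarrow> 'a list \<Rightarrow> bool" where
  "equiv_seq K xs ys \<longleftrightarrow> length xs = length ys \<and>
     (\<forall>a::nat \<Rightarrow> real.
        norm (\<Sum>i<length xs. a i *\<^sub>R xs ! i) / K \<le> norm (\<Sum>i<length ys. a i *\<^sub>R ys ! i) \<and>
        norm (\<Sum>i<length ys. a i *\<^sub>R ys ! i) \<le> K * norm (\<Sum>i<length xs. a i *\<^sub>R xs ! i))"

text \<open>Ordinals are elements of a well-ordered type; the ordinal 0 is the least element.\<close>
definition is_zero :: "'o::wellorder \<Rightarrow> bool" where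
  "is_zero \<xi> \<longleftrightarrow> (\<forall>\<beta>. \<not> \<beta> < \<xi>)"

definition ord_legal :: "'o::wellorder \<Rightarrow> 'o list \<Rightarrow> bool" where
  "ord_legal \<alpha> \<xi>s \<longleftrightarrow>
     (\<forall>l<length \<xi>s. if l = 0 then \<xi>s ! 0 < \<alpha> else \<xi>s ! l < \<xi>s ! (l - 1))"

text \<open>Game G: I plays (Y_l, xi_l); II plays (F_l, v_l). A strategy for II maps the
  list of I's moves so far (including the current one) to II's response.
  II wins with P if its responses are always legal and every finished play
  (the last ordinal is 0) has outcome satisfying P; if alpha = 0 the empty outcome must satisfy P.\<close>
definition II_wins_G :: "(nat \<Rightarrow> 'a::banach) \<Rightarrow> real set \<Rightarrow> 'a set \<Rightarrow> 'o::wellorder \<Rightarrow>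
    ('a list \<Rightarrow> bool) \<Rightarrow> bool" where
  "II_wins_G e F X \<alpha> P \<longleftrightarrow> (is_zero \<alpha> \<longrightarrow> P []) \<and>
    (\<exists>\<sigma> :: ('a set \<times> 'o) list \<Rightarrow> ('a set \<times> 'a).
      \<forall>ms. ms \<noteq> [] \<and> ord_legal \<alpha> (map snd ms) \<and>
           (\<forall>l<length ms. block_subspace e F (fst (ms ! l)) \<and> fst (ms ! l) \<subseteq> X) \<longrightarrow>
        (let rs = map (\<lambda>l. \<sigma> (take (Suc l) ms)) [0..<length ms] in
          Ffindim e F (fst (last rs)) \<and> fst (last rs) \<subseteq> fst (last ms) \<and>
          snd (last rs) \<noteq> 0 \<and> snd (last rs) \<in> sumset (map fst rs) \<and>
          (is_zero (snd (last ms)) \<longrightarrow> P (map snd rs))))"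

text \<open>Game F: I plays (n_l, xi_l); II plays (F_l, x_l) with F_l a finite-dimensional
  subspace of X \<inter> [e_i]_{i>n_l}.\<close>
definition II_wins_F :: "(nat \<Rightarrow> 'a::banach) \<Rightarrow> real set \<Rightarrow> 'a set \<Rightarrow> 'o::wellorder \<Rightarrow>
    ('a list \<Rightarrow> bool) \<Rightarrow> bool" where
  "II_wins_F e F X \<alpha> P \<longleftrightarrow> (is_zero \<alpha> \<longrightarrow> P []) \<and>
    (\<exists>\<sigma> :: (int \<times> 'o) list \<Rightarrow> ('a set \<times> 'a).
      \<forall>ms. ms \<noteq> [] \<and> ord_legal \<alpha> (map snd ms) \<longrightarrow>
        (let rs = map (\<lambda>l. \<sigma> (take (Suc l) ms)) [0..<length ms] in
          Ffindim e F (fst (last rs)) \<and> fst (last rs) \<subseteq> X \<inter> tailsp e F (fst (last ms)) \<and>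
          snd (last rs) \<noteq> 0 \<and> snd (last rs) \<in> sumset (map fst rs) \<and>
          (is_zero (snd (last ms)) \<longrightarrow> P (map snd rs))))"

text \<open>Game A: in round l, II plays n_l (as a function tau of I's earlier moves);
  I plays (E_l, u_l, Y_l, xi_l); II plays (F_l, v_l) (as a function sigma of I's moves
  up to and including round l). The outcome (u_0,v_0,...,u_k,v_k) is passed to P
  as the pair of lists (u_0..u_k) and (v_0..v_k).\<close>
definition II_wins_A :: "(nat \<Rightarrow> 'a::banach) \<Rightarrow> real set \<Rightarrow> 'a set \<Rightarrow> 'o::wellorder \<Rightarrow>
    ('a list \<Rightarrow> 'a list \<Rightarrow> bool) \<Rightarrow> bool" where
  "II_wins_A e F X \<alpha> P \<longleftrightarrow> (is_zero \<alpha> \<longrightarrow> P [] []) \<and>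
    (\<exists>(\<tau> :: ('a set \<times> 'a \<times> 'a set \<times> 'o) list \<Rightarrow> int)
      (\<sigma> :: ('a set \<times> 'a \<times> 'a set \<times> 'o) list \<Rightarrow> ('a set \<times> 'a)).
      \<forall>ms. ms \<noteq> [] \<and> ord_legal \<alpha> (map (\<lambda>m. snd (snd (snd m))) ms) \<and>
           (\<forall>l<length ms.
              Ffindim e F (fst (ms ! l)) \<and>
              fst (ms ! l) \<subseteq> X \<inter> tailsp e F (\<tau> (take l ms)) \<and>
              fst (snd (ms ! l)) \<noteq> 0 \<and>
              fst (snd (ms ! l)) \<in> sumset (map fst (take (Suc l) ms)) \<and>
              block_subspace e F (fst (snd (snd (ms ! l)))) \<and>
              fst (snd (snd (ms ! l))) \<subseteq> X) \<longrightarrow>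
        (let rs = map (\<lambda>l. \<sigma> (take (Suc l) ms)) [0..<length ms] in
          Ffindim e F (fst (last rs)) \<and> fst (last rs) \<subseteq> fst (snd (snd (last ms))) \<and>
          snd (last rs) \<noteq> 0 \<and> snd (last rs) \<in> sumset (map fst rs) \<and>
          (is_zero (snd (snd (snd (last ms)))) \<longrightarrow>
             P (map (\<lambda>m. fst (snd m)) ms) (map snd rs))))"

end

theory Submission
  imports Defs
begin

definition bstep :: "(('a set \<times> 'a \<times> 'a set \<times> 'o) list \<Rightarrow> int) \<Rightarrow> ((int \<times> 'o) list \<Rightarrow> 'a set \<times> 'a) \<Rightarrow> ('a set \<times> 'o)
   \<Rightarrow> (int \<times> 'o) list \<times> ('a set \<times> 'a \<times> 'a set \<times> 'o) list
   \<Rightarrow> (int \<times> 'o) list \<times> ('a set \<times> 'a \<times> 'a set \<times> 'o) list" where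
 "bstep \<tau> s m p = (let fs' = fst p @ [(\<tau> (snd p), snd m)]; r = s fs'
     in (fs', snd p @ [(fst r, snd r, fst m, snd m)]))"

definition build where "build \<tau> s ms = fold (bstep \<tau> s) ms ([],[])"

lemma build_snoc: "build \<tau> s (ms @ [m]) = bstep \<tau> s m (build \<tau> s ms)"
  by (simp add: build_def)

lemma build_len: "length (fst (build \<tau> s ms)) = length ms \<and> length (snd (build \<tau> s ms)) = length ms"
  by (induct ms rule: rev_induct) (auto simp: build_snoc bstep_def Let_def build_def)

lemma build_take: "build \<tau> s (take k ms) = (take k (fst (build \<tau> s ms)), take k (snd (build \<tau> s ms)))"
proof (induct ms rule: rev_induct)
  case Nil then show ?case by (simp add: build_def)
next
  case (snoc m ms)
  show ?case
  proof (cases "k \<le> length ms")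
    case True
    then show ?thesis using snoc build_len[of \<tau> s ms]
      by (simp add: build_snoc bstep_def Let_def)
  next
    case False
    then show ?thesis using build_len[of \<tau> s "ms @ [m]"] by simp
  qed
qed

lemma build_nth:
  "l < length ms \<Longrightarrow>
   fst (build \<tau> s ms) ! l = (\<tau> (take l (snd (build \<tau> s ms))), snd (ms ! l)) \<and>
   snd (build \<tau> s ms) ! l = (fst (s (take (Suc l) (fst (build \<tau> s ms)))),
        snd (s (take (Suc l) (fst (build \<tau> s ms)))), fst (ms ! l), snd (ms ! l))"
proof (induct ms arbitrary: l rule: rev_induct)
  case Nil then show ?case by simp
next
  case (snoc m ms)
  have len: "length (fst (build \<tau> s ms)) = length ms" "length (snd (build \<tau> s ms)) = length ms"
    using build_len by auto
  show ?case
  proof (cases "l < length ms")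
    case True
    then show ?thesis using snoc(1)[OF True] len
      by (simp add: build_snoc bstep_def Let_def nth_append)
  next
    case False
    then have "l = length ms" using snoc(2) by simp
    then show ?thesis using len
      by (simp add: build_snoc bstep_def Let_def nth_append)
  qed
qed

lemma ord_legal_take: "ord_legal \<alpha> xs \<Longrightarrow> ord_legal \<alpha> (take k xs)"
  unfolding ord_legal_def by auto

lemma equiv_compose:
  assumes "equiv_seq K us ys" "equiv_seq C us vs" "K \<ge> 1" "C \<ge> 1"
  shows "equiv_seq (K * C) vs ys"
  unfolding equiv_seq_def
proof (intro conjI allI)
  show "length vs = length ys" using assms unfolding equiv_seq_def by simp
  fix a :: "nat \<Rightarrow> real"
  define U where "U = norm (\<Sum>i<length us. a i *\<^sub>R us ! i)"
  define V where "V = norm (\<Sum>i<length vs. a i *\<^sub>R vs ! i)"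
  define Y where "Y = norm (\<Sum>i<length ys. a i *\<^sub>R ys ! i)"
  have h: "U / K \<le> Y" "Y \<le> K * U" "U / C \<le> V" "V \<le> C * U"
    using assms(1,2) unfolding equiv_seq_def U_def V_def Y_def by auto
  have "U \<le> K * Y" using h(1) assms(3) by (simp add: field_simps)
  moreover have "U \<le> C * V" using h(3) assms(4) by (simp add: field_simps)
  ultimately have "V \<le> (K*C) * Y" "Y \<le> (K*C) * V" using h(2,4) assms(3,4)
    by (smt (verit) mult.assoc mult.commute mult_left_mono)+
  then show "V / (K*C) \<le> Y" "Y \<le> K * C * V" using assms(3,4)
    by (simp_all add: field_simps)
qed
theorem lemma4p6:
  fixes e :: "nat \<Rightarrow> 'a::banach" and F :: "real set" and X :: "'a set"
    and y :: "nat \<Rightarrow> 'a" and \<alpha> :: "'o::wellorder" and K C :: real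
  assumes "schauder_basis e"
    and "countable_subfield F"
    and "norm_closed e F"
    and "block_subspace e F X"
    and "block_seq e F y"
    and "countable {\<beta>. \<beta> < \<alpha>}"
    and "K \<ge> 1" and "C \<ge> 1"
    and "II_wins_F e F X \<alpha> (\<lambda>xs. equiv_seq K xs (map y [0..<length xs]))"
    and "II_wins_A e F X \<alpha> (\<lambda>us vs. equiv_seq C us vs)"
  shows "II_wins_G e F X \<alpha> (\<lambda>vs. equiv_seq (K * C) vs (map y [0..<length vs]))"
proof -
  obtain \<sigma>F :: "(int \<times> 'o) list \<Rightarrow> ('a set \<times> 'a)" where hF:
    "\<And>ms. ms \<noteq> [] \<Longrightarrow> ord_legal \<alpha> (map snd ms) \<Longrightarrow>
        (let rs = map (\<lambda>l. \<sigma>F (take (Suc l) ms)) [0..<length ms] in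
          Ffindim e F (fst (last rs)) \<and> fst (last rs) \<subseteq> X \<inter> tailsp e F (fst (last ms)) \<and>
          snd (last rs) \<noteq> 0 \<and> snd (last rs) \<in> sumset (map fst rs) \<and>
          (is_zero (snd (last ms)) \<longrightarrow> equiv_seq K (map snd rs) (map y [0..<length (map snd rs)])))"
    using assms(9) unfolding II_wins_F_def by blast
  obtain \<tau> :: "('a set \<times> 'a \<times> 'a set \<times> 'o) list \<Rightarrow> int"
    and \<sigma>A :: "('a set \<times> 'a \<times> 'a set \<times> 'o) list \<Rightarrow> ('a set \<times> 'a)" where hA:
    "\<And>ms. ms \<noteq> [] \<Longrightarrow> ord_legal \<alpha> (map (\<lambda>m. snd (snd (snd m))) ms) \<Longrightarrow>
           (\<forall>l<length ms.
              Ffindim e F (fst (ms ! l)) \<and>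
              fst (ms ! l) \<subseteq> X \<inter> tailsp e F (\<tau> (take l ms)) \<and>
              fst (snd (ms ! l)) \<noteq> 0 \<and>
              fst (snd (ms ! l)) \<in> sumset (map fst (take (Suc l) ms)) \<and>
              block_subspace e F (fst (snd (snd (ms ! l)))) \<and>
              fst (snd (snd (ms ! l))) \<subseteq> X) \<Longrightarrow>
        (let rs = map (\<lambda>l. \<sigma>A (take (Suc l) ms)) [0..<length ms] in
          Ffindim e F (fst (last rs)) \<and> fst (last rs) \<subseteq> fst (snd (snd (last ms))) \<and>
          snd (last rs) \<noteq> 0 \<and> snd (last rs) \<in> sumset (map fst rs) \<and>
          (is_zero (snd (snd (snd (last ms)))) \<longrightarrow>
             equiv_seq C (map (\<lambda>m. fst (snd m)) ms) (map snd rs)))"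
    using assms(10) unfolding II_wins_A_def by blast
  define \<sigma>G where "\<sigma>G = (\<lambda>ms. \<sigma>A (snd (build \<tau> \<sigma>F ms)))"
  have zero: "equiv_seq (K * C) [] (map y [0..<length ([]::'a list)])"
    by (simp add: equiv_seq_def)
  have main: "let rs = map (\<lambda>l. \<sigma>G (take (Suc l) ms)) [0..<length ms] in
          Ffindim e F (fst (last rs)) \<and> fst (last rs) \<subseteq> fst (last ms) \<and>
          snd (last rs) \<noteq> 0 \<and> snd (last rs) \<in> sumset (map fst rs) \<and>
          (is_zero (snd (last ms)) \<longrightarrow> equiv_seq (K * C) (map snd rs) (map y [0..<length (map snd rs)]))"
    if ne: "ms \<noteq> []" and leg: "ord_legal \<alpha> (map snd ms)"
      and bs: "\<forall>l<length ms. block_subspace e F (fst (ms ! l)) \<and> fst (ms ! l) \<subseteq> X"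
    for ms :: "('a set \<times> 'o) list"
  proof -
    define n where "n = length ms"
    define fs where "fs = fst (build \<tau> \<sigma>F ms)"
    define as where "as = snd (build \<tau> \<sigma>F ms)"
    define rsF where "rsF = map (\<lambda>j. \<sigma>F (take (Suc j) fs)) [0..<n]"
    have lfs: "length fs = n" and las: "length as = n"
      using build_len unfolding fs_def as_def n_def by auto
    have npos: "n > 0" using ne n_def by simp
    have fsl: "\<And>l. l < n \<Longrightarrow> fs ! l = (\<tau> (take l as), snd (ms ! l))"
      using build_nth unfolding fs_def as_def n_def by blast
    have asl: "as ! l = (fst (rsF ! l), snd (rsF ! l), fst (ms ! l), snd (ms ! l))" if "l < n" for l
      using build_nth[of l ms \<tau> \<sigma>F] that unfolding fs_def as_def n_def rsF_def by (simp add: lfs[unfolded fs_def n_def])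
    have sfs: "map snd fs = map snd ms"
      by (rule nth_equalityI) (auto simp: lfs n_def fsl)
    have sas: "map (\<lambda>m. snd (snd (snd m))) as = map snd ms"
      by (rule nth_equalityI) (auto simp: las n_def asl)
    have fas: "map fst as = map fst rsF"
      by (rule nth_equalityI) (auto simp: las rsF_def asl)
    have usas: "map (\<lambda>m. fst (snd m)) as = map snd rsF"
      by (rule nth_equalityI) (auto simp: las rsF_def asl)
    have Fl: "Ffindim e F (fst (rsF ! l)) \<and> fst (rsF ! l) \<subseteq> X \<inter> tailsp e F (fst (fs ! l)) \<and>
          snd (rsF ! l) \<noteq> 0 \<and> snd (rsF ! l) \<in> sumset (map fst (take (Suc l) rsF)) \<and>
          (is_zero (snd (fs ! l)) \<longrightarrow> equiv_seq K (map snd (take (Suc l) rsF)) (map y [0..<Suc l]))"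
      if l: "l < n" for l
    proof -
      have ne': "take (Suc l) fs \<noteq> []" using l lfs npos by (cases fs) auto
      have leg': "ord_legal \<alpha> (map snd (take (Suc l) fs))"
        using ord_legal_take[OF leg, of "Suc l"] sfs by (simp add: take_map[symmetric])
      have eq: "map (\<lambda>j. \<sigma>F (take (Suc j) (take (Suc l) fs))) [0..<length (take (Suc l) fs)]
           = take (Suc l) rsF"
        using l lfs by (intro nth_equalityI) (auto simp: rsF_def min_def split: if_splits)
      have lst: "last (take (Suc l) rsF) = rsF ! l" "last (take (Suc l) fs) = fs ! l"
        using l lfs by (auto simp: rsF_def take_Suc_conv_app_nth)
      have lt: "length (take (Suc l) rsF) = Suc l" using l by (simp add: rsF_def)
      have lr: "length rsF = n" by (simp add: rsF_def)
      have mn: "min (length rsF) (Suc l) = Suc l" using l lr by simp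
      show ?thesis using hF[OF ne' leg'] unfolding Let_def eq lst length_map lt
        by (simp only: mn) blast
    qed
    have Acond: "\<forall>l<length as.
              Ffindim e F (fst (as ! l)) \<and>
              fst (as ! l) \<subseteq> X \<inter> tailsp e F (\<tau> (take l as)) \<and>
              fst (snd (as ! l)) \<noteq> 0 \<and>
              fst (snd (as ! l)) \<in> sumset (map fst (take (Suc l) as)) \<and>
              block_subspace e F (fst (snd (snd (as ! l)))) \<and>
              fst (snd (snd (as ! l))) \<subseteq> X"
    proof (intro allI impI)
      fix l assume l: "l < length as"
      then have l': "l < n" using las by simp
      have "map fst (take (Suc l) as) = map fst (take (Suc l) rsF)"
        by (simp add: take_map[symmetric] fas)
      then show "Ffindim e F (fst (as ! l)) \<and>
              fst (as ! l) \<subseteq> X \<inter> tailsp e F (\<tau> (take l as)) \<and>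
              fst (snd (as ! l)) \<noteq> 0 \<and>
              fst (snd (as ! l)) \<in> sumset (map fst (take (Suc l) as)) \<and>
              block_subspace e F (fst (snd (snd (as ! l)))) \<and>
              fst (snd (snd (as ! l))) \<subseteq> X"
        using Fl[OF l'] asl[OF l'] fsl[OF l'] bs l' n_def by simp
    qed
    have ane: "as \<noteq> []" using las npos by auto
    note HA = hA[OF ane _ Acond]
    have rsG: "map (\<lambda>l. \<sigma>G (take (Suc l) ms)) [0..<length ms] = map (\<lambda>l. \<sigma>A (take (Suc l) as)) [0..<length as]"
      using las by (auto simp: \<sigma>G_def build_take as_def n_def)
    have lastas: "last as = as ! (n - 1)" "last ms = ms ! (n - 1)"
      using las npos n_def ane ne by (auto simp: last_conv_nth)
    have laseq: "fst (snd (snd (last as))) = fst (last ms)" "snd (snd (snd (last as))) = snd (last ms)"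
      using asl[of "n - 1"] npos lastas by auto
    have lastfs: "snd (fs ! (n - 1)) = snd (last ms)" using fsl[of "n-1"] npos lastas by simp
    have Ffull: "is_zero (snd (last ms)) \<longrightarrow> equiv_seq K (map snd rsF) (map y [0..<n])"
      using Fl[of "n - 1"] npos lastfs by (simp add: rsF_def)
    have lrs: "length (map (\<lambda>l. \<sigma>A (take (Suc l) as)) [0..<length as]) = n" using las by simp
    show ?thesis
      unfolding rsG
      using HA[unfolded sas, OF leg] Ffull equiv_compose[OF _ _ assms(7,8)] laseq lrs
      unfolding Let_def usas by auto
  qed
  show ?thesis
    unfolding II_wins_G_def
  proof (intro conjI impI)
    show "equiv_seq (K * C) [] (map y [0..<length []])" using zero by simp
    show "\<exists>\<sigma>. \<forall>ms. ms \<noteq> [] \<and> ord_legal \<alpha> (map snd ms) \<and>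
           (\<forall>l<length ms. block_subspace e F (fst (ms ! l)) \<and> fst (ms ! l) \<subseteq> X) \<longrightarrow>
        (let rs = map (\<lambda>l. \<sigma> (take (Suc l) ms)) [0..<length ms] in
          Ffindim e F (fst (last rs)) \<and> fst (last rs) \<subseteq> fst (last ms) \<and>
          snd (last rs) \<noteq> 0 \<and> snd (last rs) \<in> sumset (map fst rs) \<and>
          (is_zero (snd (last ms)) \<longrightarrow> equiv_seq (K * C) (map snd rs) (map y [0..<length (map snd rs)])))"
      by (rule exI[of _ \<sigma>G]) (use main in blast)
  qed
qed
end
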